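(* Every obliviously-computable function $f:\mathbb{N}^d\to\mathbb{N}$ is nondecreasing, i.e. $\vec{a}\le\vec{b}$ componentwise implies $f(\vec{a})\le f(\vec{b})$.
   Context: A chemical reaction network (CRN) is a pair $(\mathcal{S},\mathcal{R})$ of a finite set of species and a finite set of reactions $(\vec{R},\vec{P})\in\mathbb{N}^{\mathcal{S}}\times\mathbb{N}^{\mathcal{S}}$. A configuration is $\vec{C}\in\mathbb{N}^{\mathcal{S}}$; a reaction is applicable if $\vec{R}\le\vec{C}$ and yields $\vec{C}-\vec{R}+\vec{P}$; reachability is via finite sequences of applicable reactions. To compute $f:\mathbb{N}^d\to\mathbb{N}$ the CRN has input species $X_1,\ldots,X_d$, output species $Y$, leader species $L$; the initial configuration $\vec{I}_{\vec{x}}$ has $\vec{x}(i)$ copies of $X_i$, one $L$, nothing else. $\vec{C}$ is stable if all configurations reachable from it have the same count of $Y$. The CRN stably computes $f$ if for every $\vec{x}$ and every $\vec{C}$ reachable from $\vec{I}_{\vec{x}}$ some stable $\vec{O}$ reachable from $\vec{C}$ has $\vec{O}(Y)=f(\vec{x})$. The CRN is output-oblivious if $Y$ is never a reactant. $f$ is obliviously-computable if stably computed by an output-oblivious CRN. *)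

theory Defs
  imports Main
begin

text \<open>Species range over a finite type 's;
a configuration is a function 's \<Rightarrow> nat; a reaction is a pair (R, P) of
reactant and product vectors; a CRN is a finite set of reactions.\<close>

type_synonym 's config = "'s \<Rightarrow> nat"
type_synonym 's reaction = "'s config \<times> 's config"

definition applicable :: "'s reaction \<Rightarrow> 's config \<Rightarrow> bool" where
  "applicable r C \<longleftrightarrow> fst r \<le> C"

definition apply_reaction :: "'s reaction \<Rightarrow> 's config \<Rightarrow> 's config" where
  "apply_reaction r C = (\<lambda>s. C s - fst r s + snd r s)"

definition step :: "'s reaction set \<Rightarrow> 's config \<Rightarrow> 's config \<Rightarrow> bool" where
  "step Rs C D \<longleftrightarrow> (\<exists>r\<in>Rs. applicable r C \<and> D = apply_reaction r C)"

definition reachable :: "'s reaction set \<Rightarrow> 's config \<Rightarrow> 's config \<Rightarrow> bool" where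
  "reachable Rs = (step Rs)\<^sup>*\<^sup>*"

definition stable :: "'s reaction set \<Rightarrow> 's \<Rightarrow> 's config \<Rightarrow> bool" where
  "stable Rs Y C \<longleftrightarrow> (\<forall>D. reachable Rs C D \<longrightarrow> D Y = C Y)"

definition initial :: "nat \<Rightarrow> (nat \<Rightarrow> 's) \<Rightarrow> 's \<Rightarrow> nat list \<Rightarrow> 's config" where
  "initial d X L x = (\<lambda>s. (\<Sum>i\<in>{i. i < d \<and> X i = s}. x ! i) + (if s = L then 1 else 0))"

definition stably_computes ::
  "'s reaction set \<Rightarrow> nat \<Rightarrow> (nat \<Rightarrow> 's) \<Rightarrow> 's \<Rightarrow> 's \<Rightarrow> (nat list \<Rightarrow> nat) \<Rightarrow> bool" where
  "stably_computes Rs d X Y L f \<longleftrightarrow>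
     finite Rs \<and> inj_on X {..<d} \<and> L \<notin> X ` {..<d} \<and> Y \<notin> X ` {..<d} \<and> Y \<noteq> L \<and>
     (\<forall>x. length x = d \<longrightarrow>
        (\<forall>C. reachable Rs (initial d X L x) C \<longrightarrow>
           (\<exists>Out. reachable Rs C Out \<and> stable Rs Y Out \<and> Out Y = f x)))"

definition output_oblivious :: "'s reaction set \<Rightarrow> 's \<Rightarrow> bool" where
  "output_oblivious Rs Y \<longleftrightarrow> (\<forall>r\<in>Rs. fst r Y = 0)"

definition obliviously_computable :: "nat \<Rightarrow> (nat list \<Rightarrow> nat) \<Rightarrow> bool" where
  "obliviously_computable d f \<longleftrightarrow>
     (\<exists>(Rs :: nat reaction set) X Y L S. finite S \<and>
        (\<forall>r\<in>Rs. \<forall>s. s \<notin> S \<longrightarrow> fst r s = 0 \<and> snd r s = 0) \<and>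
        X ` {..<d} \<subseteq> S \<and> Y \<in> S \<and> L \<in> S \<and>
        output_oblivious Rs Y \<and> stably_computes Rs d X Y L f)"

end

theory Submission
  imports Defs
begin

lemma step_lift:
  assumes "step Rs C D" shows "step Rs (\<lambda>s. C s + E s) (\<lambda>s. D s + E s)"
proof -
  from assms obtain r where r: "r \<in> Rs" "fst r \<le> C" "D = apply_reaction r C"
    unfolding step_def applicable_def by blast
  have le: "\<And>s. fst r s \<le> C s" using r(2) by (simp add: le_fun_def)
  have "fst r \<le> (\<lambda>s. C s + E s)" unfolding le_fun_def using le trans_le_add1 by blast
  moreover have "(\<lambda>s. D s + E s) = apply_reaction r (\<lambda>s. C s + E s)"
    unfolding r(3) apply_reaction_def proof
    fix x show "C x - fst r x + snd r x + E x = C x + E x - fst r x + snd r x" using le[of x] by linarith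
  qed
  ultimately show ?thesis using r(1) unfolding step_def applicable_def by blast
qed

lemma reach_lift:
  assumes "reachable Rs C D" shows "reachable Rs (\<lambda>s. C s + E s) (\<lambda>s. D s + E s)"
  using assms unfolding reachable_def
proof (induction rule: rtranclp_induct)
  case base then show ?case by simp
next
  case (step y z)
  have "step Rs (\<lambda>s. y s + E s) (\<lambda>s. z s + E s)" by (rule step_lift[OF step(2)])
  then show ?case by (rule rtranclp.rtrancl_into_rtrancl[of "step Rs", OF step(3)])
qed

lemma reach_mono:
  assumes "output_oblivious Rs Y" "reachable Rs C D" shows "C Y \<le> D Y"
  using assms(2) unfolding reachable_def
proof (induction rule: rtranclp_induct)
  case base then show ?case by simp
next
  case (step y z)
  then obtain r where "r \<in> Rs" "z = apply_reaction r y" unfolding step_def by blast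
  then have "fst r Y = 0" using assms(1) by (simp add: output_oblivious_def)
  then have "y Y \<le> z Y" using \<open>z = apply_reaction r y\<close> by (simp add: apply_reaction_def)
  then show ?case using step by simp
qed

theorem mainTheorem8:
  fixes d :: nat and f :: "nat list \<Rightarrow> nat"
  assumes "obliviously_computable d f"
  shows "\<forall>a b. length a = d \<longrightarrow> length b = d \<longrightarrow>
           (\<forall>i<d. a ! i \<le> b ! i) \<longrightarrow> f a \<le> f b"
proof (intro allI impI)
  fix a b :: "nat list"
  assume la: "length a = d" and lb: "length b = d" and le: "\<forall>i<d. a ! i \<le> b ! i"
  from assms obtain Rs :: "nat reaction set" and X Y L where
    oo: "output_oblivious Rs Y" and sc: "stably_computes Rs d X Y L f"
    unfolding obliviously_computable_def by (elim exE conjE) (rule that)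
  define E where "E s = (\<Sum>i\<in>{i. i < d \<and> X i = s}. b ! i - a ! i)" for s
  have "Y \<notin> X ` {..<d}" using sc unfolding stably_computes_def by (elim conjE)
  then have "{i. i < d \<and> X i = Y} = {}" by auto
  then have EY: "E Y = 0" unfolding E_def by (simp only: sum.empty)
  have scx: "\<And>x C. length x = d \<Longrightarrow> reachable Rs (initial d X L x) C \<Longrightarrow>
           (\<exists>Out. reachable Rs C Out \<and> stable Rs Y Out \<and> Out Y = f x)"
    using sc unfolding stably_computes_def by (elim conjE) blast
  have ib: "initial d X L b = (\<lambda>s. initial d X L a s + E s)"
  proof
    fix s
    have "(\<Sum>i\<in>{i. i < d \<and> X i = s}. b ! i) = (\<Sum>i\<in>{i. i < d \<and> X i = s}. a ! i + (b ! i - a ! i))"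
      using le by (intro sum.cong) auto
    also have "\<dots> = (\<Sum>i\<in>{i. i < d \<and> X i = s}. a ! i) + E s"
      unfolding E_def by (simp add: sum.distrib)
    finally show "initial d X L b s = initial d X L a s + E s"
      unfolding initial_def by simp
  qed
  have "reachable Rs (initial d X L a) (initial d X L a)" unfolding reachable_def by simp
  from scx[OF la this] obtain Oa where Oa: "reachable Rs (initial d X L a) Oa" "Oa Y = f a"
    by blast
  have r2: "reachable Rs (initial d X L b) (\<lambda>s. Oa s + E s)"
    using reach_lift[OF Oa(1)] ib by simp
  from scx[OF lb r2] obtain Ob where Ob: "reachable Rs (\<lambda>s. Oa s + E s) Ob" "Ob Y = f b"
    by blast
  have "Oa Y + E Y \<le> Ob Y" using reach_mono[OF oo Ob(1)] by simp
  then show "f a \<le> f b" using Oa(2) Ob(2) EY by simp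
qed

end
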